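(* For every integer $a\geq 1$, $$\sigma(2,2a-1)=2a(2a-1)\lambda(2a+1)-8\sum_{j=1}^{a-1}j\,\lambda(2a-2j)\lambda(2j+1),$$ where an empty sum equals $0$.
   Context: For integers $t\geq 1$ and $n\geq 1$ let $S_n^{(t)}=\sum_{k=1}^{n}\frac{1}{(2k-1)^t}$, and for integers $s\geq 2$, $t\geq 1$ let $\sigma(s,t)=\sum_{n\geq 1}\frac{S_n^{(t)}}{n^s}$. For real $s>1$, $\lambda(s)=\sum_{n\geq 1}\frac{1}{(2n-1)^s}=(1-2^{-s})\zeta(s)$. *)

theory Defs
  imports "HOL-Analysis.Analysis"
begin

definition S_odd :: "nat \<Rightarrow> nat \<Rightarrow> real" where
  "S_odd t n = (\<Sum>k=1..n. 1 / (2 * real k - 1) ^ t)"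

definition sigma_os :: "nat \<Rightarrow> nat \<Rightarrow> real" where
  "sigma_os s t = (\<Sum>n. S_odd t (n + 1) / (real (n + 1)) ^ s)"

definition dlambda :: "real \<Rightarrow> real" where
  "dlambda s = (\<Sum>n. 1 / (2 * real n + 1) powr s)"

end

theory Submission
  imports Defs "HOL-Real_Asymp.Real_Asymp"
begin
lemma odd_pow_summable:
  assumes "s \<ge> 2"
  shows "summable (\<lambda>k::nat. (1 / (2 * real k + 1)) ^ s)"
proof -
  have "summable (\<lambda>k. inverse (real k ^ s))" by (rule inverse_power_summable[OF assms])
  hence s1: "summable (\<lambda>k. inverse (real (Suc k) ^ s))"
    by (subst summable_Suc_iff)
  show ?thesis
  proof (rule summable_comparison_test[OF _ s1])
    show "\<exists>N. \<forall>n\<ge>N. norm ((1 / (2 * real n + 1)) ^ s) \<le> inverse (real (Suc n) ^ s)"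
    proof (intro exI allI impI)
      fix n :: nat
      have "(1 / (2 * real n + 1)) ^ s \<le> (1 / real (Suc n)) ^ s"
        by (intro power_mono divide_left_mono) auto
      thus "norm ((1 / (2 * real n + 1)) ^ s) \<le> inverse (real (Suc n) ^ s)"
        by (simp add: power_one_over inverse_eq_divide)
    qed
  qed
qed

lemma even_sq_summable: "summable (\<lambda>m::nat. (1 / (2 * real m + 2)) ^ 2)"
proof -
  have "summable (\<lambda>k. inverse (real k ^ 2))" by (rule inverse_power_summable) simp
  hence s1: "summable (\<lambda>k. inverse (real (Suc k) ^ 2))"
    by (subst summable_Suc_iff)
  show ?thesis
  proof (rule summable_comparison_test[OF _ s1])
    show "\<exists>N. \<forall>n\<ge>N. norm ((1 / (2 * real n + 2)) ^ 2) \<le> inverse (real (Suc n) ^ 2)"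
    proof (intro exI allI impI)
      fix n :: nat
      have "(1 / (2 * real n + 2)) ^ 2 \<le> (1 / real (Suc n)) ^ 2"
        by (intro power_mono divide_left_mono) auto
      thus "norm ((1 / (2 * real n + 2)) ^ 2) \<le> inverse (real (Suc n) ^ 2)"
        by (simp add: power_one_over inverse_eq_divide)
    qed
  qed
qed

definition Lam :: "nat \<Rightarrow> real" where "Lam s = (\<Sum>k. (1 / (2 * real k + 1)) ^ s)"
definition E2 :: real where "E2 = (\<Sum>m. (1 / (2 * real m + 2)) ^ 2)"

lemma Lam_sums: "s \<ge> 2 \<Longrightarrow> (\<lambda>k::nat. (1 / (2 * real k + 1)) ^ s) sums Lam s"
  unfolding Lam_def using odd_pow_summable by (simp add: summable_sums)

lemma E2_sums: "(\<lambda>m::nat. (1 / (2 * real m + 2)) ^ 2) sums E2"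
  unfolding E2_def using even_sq_summable by (simp add: summable_sums)

lemma dlambda_eq: "dlambda (real s) = Lam s"
  unfolding dlambda_def Lam_def
  by (intro suminf_cong) (simp add: powr_realpow power_one_over)

lemma pf_poly:
  fixes c d e :: real
  assumes cd: "c * d = e * (c + d)"
  shows "c ^ Suc q * d ^ 2 = (\<Sum>i<q. real (q - i) * c ^ (i + 2) * e ^ (q + 1 - i))
          + real (q + 1) * e ^ (q + 2) * (c + d) + e ^ (q + 1) * d ^ 2"
proof (induction q)
  case 0
  have "c * d^2 = (c*d) * d" by (simp add: power2_eq_square)
  also have "\<dots> = (e * (c + d)) * d" by (simp only: cd)
  also have "\<dots> = e * (c * d) + e * d^2" by (simp add: power2_eq_square algebra_simps)
  also have "\<dots> = e * (e * (c+d)) + e * d^2" unfolding cd ..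
  also have "\<dots> = e^2 * (c+d) + e * d^2" by (simp add: power2_eq_square algebra_simps)
  finally show ?case by (simp add: power2_eq_square)
next
  case (Suc q)
  have "c * d^2 = (c*d) * d" by (simp add: power2_eq_square)
  also have "\<dots> = (e * (c + d)) * d" by (simp only: cd)
  also have "\<dots> = e * (c * d) + e * d^2" by (simp add: power2_eq_square algebra_simps)
  also have "\<dots> = e * (e * (c+d)) + e * d^2" unfolding cd ..
  also have "\<dots> = e^2 * (c+d) + e * d^2" by (simp add: power2_eq_square algebra_simps)
  finally have cd2: "c * d^2 = e^2 * (c+d) + e * d^2" .
  have "c ^ Suc (Suc q) * d ^ 2 = c * (c ^ Suc q * d ^ 2)" by simp
  also have "\<dots> = (\<Sum>i<q. real (q - i) * c ^ (i + 3) * e ^ (q + 1 - i))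
          + real (q + 1) * e ^ (q + 2) * c^2 + real (q+1) * e^(q+2) * (c * d) + e ^ (q + 1) * (c * d ^ 2)"
  proof -
    have "c * (\<Sum>i<q. real (q - i) * c ^ (i + 2) * e ^ (q + 1 - i)) = (\<Sum>i<q. real (q - i) * c ^ (i + 3) * e ^ (q + 1 - i))"
      unfolding sum_distrib_left by (intro sum.cong) (auto simp: eval_nat_numeral)
    thus ?thesis unfolding Suc.IH by (simp add: algebra_simps power2_eq_square)
  qed
  also have "\<dots> = (\<Sum>i<q. real (q - i) * c ^ (i + 3) * e ^ (q + 1 - i))
          + real (q + 1) * e ^ (q + 2) * c^2 + real (q+2) * e^(q+3) * (c + d) + e ^ (q + 2) * d ^ 2"
    unfolding cd cd2 by (simp add: algebra_simps power_add eval_nat_numeral)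
  finally have h1: "c ^ Suc (Suc q) * d ^ 2 = (\<Sum>i<q. real (q - i) * c ^ (i + 3) * e ^ (q + 1 - i))
          + real (q + 1) * e ^ (q + 2) * c^2 + real (q+2) * e^(q+3) * (c + d) + e ^ (q + 2) * d ^ 2" .
  have h2: "(\<Sum>i<Suc q. real (Suc q - i) * c ^ (i + 2) * e ^ (Suc q + 1 - i))
      = real (q + 1) * e ^ (q + 2) * c^2 + (\<Sum>i<q. real (q - i) * c ^ (i + 3) * e ^ (q + 1 - i))"
  proof -
    have "(\<Sum>i<q. real (Suc q - Suc i) * c ^ (Suc i + 2) * e ^ (Suc q + 1 - Suc i))
        = (\<Sum>i<q. real (q - i) * c ^ (i + 3) * e ^ (q + 1 - i))"
      by (intro sum.cong) (auto simp: eval_nat_numeral)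
    thus ?thesis by (subst sum.lessThan_Suc_shift) (simp add: power2_eq_square eval_nat_numeral)
  qed
  show ?case unfolding h1 h2 by (simp add: add_ac eval_nat_numeral)
qed

lemma sum_even_odd_split: "(\<Sum>j<2*(n::nat). f j) = (\<Sum>k<n. f (2*k) + f (2*k+1))"
  by (induction n) (auto simp: sum.distrib add_ac)

lemma T_lemma:
  fixes n :: nat
  obtains TA TC where "(\<lambda>k. 1/(2*real n + 2*real k + 2) - 1/(2*real k + 1)) sums TA"
    "(\<lambda>m. 1/(2*real n + 2*real m + 3) - 1/(2*real m + 2)) sums TC"
    "TA + TC + (\<Sum>k<n. 1/(2*real k + 1) + 1/(2*real n - 2*real k)) = - 1/(2*real n + 1)"
proof -
  define M where "M = 2*n+1"
  define g where "g j = 1/(real j + 1 + real M) - 1/(real j + 1)" for j :: nat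
  define F where "F j = (\<Sum>i<M. 1/(real j + real i + 1))" for j :: nat
  define H where "H = (\<Sum>i<M. 1/(real i + 1))"
  have F_lim: "F \<longlonglongrightarrow> 0"
    unfolding F_def by (intro tendsto_null_sum) real_asymp
  have Fd: "F (Suc j) - F j = g j" for j
  proof -
    have "F (Suc j) - F j = (\<Sum>i<M. 1/(real j + real (Suc i) + 1) - 1/(real j + real i + 1))"
      unfolding F_def by (simp add: sum_subtractf add_ac)
    also have "\<dots> = 1/(real j + real M + 1) - 1/(real j + real 0 + 1)"
      by (rule sum_lessThan_telescope[where f = "\<lambda>i. 1/(real j + real i + 1)"])
    finally show ?thesis unfolding g_def by (simp add: add_ac)
  qed
  have "(\<lambda>j. F (Suc j) - F j) sums (0 - F 0)" by (rule telescope_sums[OF F_lim])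
  hence gs: "g sums (- H)" unfolding Fd by (simp add: F_def H_def)
  have gnp: "g j \<le> 0" for j unfolding g_def by (simp add: frac_le)
  have "(\<lambda>j. - g j) sums H" using sums_minus[OF gs] by simp
  hence "((\<lambda>j. - g j) has_sum H) UNIV" by (rule sums_nonneg_imp_has_sum) (use gnp in auto)
  hence "((\<lambda>j. - (- g j)) has_sum (- H)) UNIV" by (rule has_sum_uminusI)
  hence gh: "(g has_sum (- H)) UNIV" by simp
  define E where "E = range (\<lambda>k::nat. 2*k)"
  define Od where "Od = range (\<lambda>k::nat. 2*k+1)"
  have gE: "g summable_on E" by (rule summable_on_subset_banach[OF has_sum_imp_summable[OF gh]]) auto
  have gO: "g summable_on Od" by (rule summable_on_subset_banach[OF has_sum_imp_summable[OF gh]]) auto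
  have EO: "E \<union> Od = UNIV"
  proof (rule set_eqI, rule iffI)
    fix x :: nat assume "x \<in> UNIV"
    show "x \<in> E \<union> Od"
    proof (cases "even x")
      case True then obtain k where "x = 2*k" by (elim evenE)
      thus ?thesis unfolding E_def by auto
    next
      case False then obtain k where "x = 2*k+1" by (elim oddE)
      thus ?thesis unfolding Od_def by auto
    qed
  qed auto
  have EOd: "E \<inter> Od = {}" unfolding E_def Od_def by auto (presburger)
  have "(g has_sum (infsum g E + infsum g Od)) (E \<union> Od)"
    by (rule has_sum_Un_disjoint[OF has_sum_infsum[OF gE] has_sum_infsum[OF gO] EOd])
  hence sumEO: "infsum g E + infsum g Od = - H" using gh EO has_sum_unique by force
  have "((g \<circ> (\<lambda>k::nat. 2*k)) has_sum infsum g E) UNIV"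
    using has_sum_infsum[OF gE] unfolding E_def by (subst (asm) has_sum_reindex) (auto simp: inj_on_def)
  hence sE: "(\<lambda>k. 1/(2*real n + 2*real k + 2) - 1/(2*real k + 1)) sums infsum g E"
    by (intro has_sum_imp_sums) (simp add: o_def g_def M_def add_ac)
  have "((g \<circ> (\<lambda>k::nat. 2*k+1)) has_sum infsum g Od) UNIV"
    using has_sum_infsum[OF gO] unfolding Od_def by (subst (asm) has_sum_reindex) (auto simp: inj_on_def)
  hence sO: "(\<lambda>m. 1/(2*real n + 2*real m + 3) - 1/(2*real m + 2)) sums infsum g Od"
    by (intro has_sum_imp_sums) (simp add: o_def g_def M_def add_ac)
  have fin1: "(\<Sum>k<n. 1/(2*real n - 2*real k)) = (\<Sum>k<n. 1/(2*real k + 2))"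
  proof -
    have "(\<Sum>k<n. 1/(2*real n - 2*real k)) = (\<Sum>k<n. 1/(2*real (n - Suc k) + 2))"
      by (intro sum.cong) (auto simp: of_nat_diff)
    also have "\<dots> = (\<Sum>k<n. 1/(2*real k + 2))"
      by (rule sum.nat_diff_reindex[where g = "\<lambda>k. 1/(2*real k + 2)"])
    finally show ?thesis .
  qed
  have fin2: "(\<Sum>k<n. 1/(2*real k + 1) + 1/(2*real n - 2*real k)) + 1/(2*real n + 1) = H"
  proof -
    have "H = (\<Sum>j<2*n. 1/(real j + 1)) + 1/(2*real n + 1)" unfolding H_def M_def by simp
    also have "(\<Sum>j<2*n. 1/(real j + 1)) = (\<Sum>k<n. 1/(2*real k + 1) + 1/(2*real k + 2))"
      by (subst sum_even_odd_split) (simp add: add_ac)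
    finally show ?thesis using fin1 by (simp add: sum.distrib)
  qed
  show ?thesis
  proof (rule that[OF sE sO])
    show "infsum g E + infsum g Od + (\<Sum>k<n. 1/(2*real k + 1) + 1/(2*real n - 2*real k)) = - 1/(2*real n + 1)"
      using sumEO fin2 by linarith
  qed
qed

lemma pf_sums:
  fixes c d :: "nat \<Rightarrow> real" and e :: real
  assumes cd: "\<And>k. c k * d k = e * (c k + d k)"
  and P: "\<And>i. i < q \<Longrightarrow> (\<lambda>k. c k ^ (i+2)) sums P i"
  and Q: "(\<lambda>k. c k + d k) sums Q" and R: "(\<lambda>k. d k ^ 2) sums R"
  shows "(\<lambda>k. c k ^ Suc q * d k ^ 2) sums ((\<Sum>i<q. real (q-i) * P i * e^(q+1-i)) + real (q+1) * e^(q+2) * Q + e^(q+1) * R)"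
proof -
  have eq: "c k ^ Suc q * d k ^ 2 = (\<Sum>i<q. real (q-i) * c k ^ (i+2) * e^(q+1-i)) + real (q+1) * e^(q+2) * (c k + d k) + e^(q+1) * d k ^ 2" for k
    by (rule pf_poly[OF cd])
  have s1: "(\<lambda>k. \<Sum>i<q. real (q-i) * c k ^ (i+2) * e^(q+1-i)) sums (\<Sum>i<q. real (q-i) * P i * e^(q+1-i))"
  proof (rule sums_sum)
    fix i assume "i \<in> {..<q}"
    hence "(\<lambda>k. c k ^ (i+2)) sums P i" using P by simp
    hence "(\<lambda>k. real (q-i) * c k ^ (i+2)) sums (real (q-i) * P i)" by (rule sums_mult)
    thus "(\<lambda>k. real (q-i) * c k ^ (i+2) * e^(q+1-i)) sums (real (q-i) * P i * e^(q+1-i))"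
      by (rule sums_mult2)
  qed
  have s2: "(\<lambda>k. real (q+1) * e^(q+2) * (c k + d k)) sums (real (q+1) * e^(q+2) * Q)"
    by (rule sums_mult[OF Q])
  have s3: "(\<lambda>k. e^(q+1) * d k ^ 2) sums (e^(q+1) * R)"
    by (rule sums_mult[OF R])
  show ?thesis unfolding eq by (intro sums_add s1 s2 s3)
qed

lemma pf_finsum:
  fixes c d :: "nat \<Rightarrow> real" and e :: real
  assumes cd: "\<And>k. k < n \<Longrightarrow> c k * d k = e * (c k + d k)"
  shows "(\<Sum>k<n. c k ^ Suc q * d k ^ 2) = (\<Sum>i<q. real (q-i) * (\<Sum>k<n. c k ^ (i+2)) * e^(q+1-i))
     + real (q+1) * e^(q+2) * (\<Sum>k<n. c k + d k) + e^(q+1) * (\<Sum>k<n. d k ^ 2)"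
proof -
  have "(\<Sum>k<n. c k ^ Suc q * d k ^ 2) = (\<Sum>k<n. (\<Sum>i<q. real (q-i) * c k ^ (i+2) * e^(q+1-i)) + real (q+1) * e^(q+2) * (c k + d k) + e^(q+1) * d k ^ 2)"
    by (intro sum.cong refl pf_poly cd) simp
  also have "\<dots> = (\<Sum>k<n. \<Sum>i<q. real (q-i) * c k ^ (i+2) * e^(q+1-i)) + real (q+1) * e^(q+2) * (\<Sum>k<n. c k + d k) + e^(q+1) * (\<Sum>k<n. d k ^ 2)"
    by (simp only: sum.distrib flip: sum_distrib_left)
  also have "(\<Sum>k<n. \<Sum>i<q. real (q-i) * c k ^ (i+2) * e^(q+1-i)) = (\<Sum>i<q. real (q-i) * (\<Sum>k<n. c k ^ (i+2)) * e^(q+1-i))"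
    by (subst sum.swap) (simp add: sum_distrib_left sum_distrib_right)
  finally show ?thesis .
qed

lemma sum_q_minus: "(\<Sum>i<q. real (q - i)) = real q * (real q + 1) / 2"
proof (induction q)
  case (Suc q)
  have "(\<Sum>i<Suc q. real (Suc q - i)) = real (Suc q - 0) + (\<Sum>i<q. real (Suc q - Suc i))"
    by (rule sum.lessThan_Suc_shift)
  also have "\<dots> = real (Suc q) + real q * (real q + 1) / 2" using Suc by simp
  finally show ?case by (simp add: field_simps)
qed simp

lemma recip_cd:
  fixes x y N :: real
  assumes "x \<noteq> 0" "y \<noteq> 0" "x + y = N" "N \<noteq> 0"
  shows "(1/x) * (1/y) = (1/N) * (1/x + 1/y)"
  using assms by (simp add: field_simps)

lemma per_n:
  fixes n q :: nat
  defines "e \<equiv> 1/(2*real n+1)"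
  shows "\<exists>VA VC. (\<lambda>k. (-1/(2*real k+1))^Suc q * (1/(2*real n+2*real k+2))^2) sums VA \<and>
     (\<lambda>m. (1/(2*real n+2*real m+3))^Suc q * (-1/(2*real m+2))^2) sums VC \<and>
     VA + (\<Sum>k<n. (1/(2*real k+1))^Suc q * (1/(2*real n-2*real k))^2) + VC
       = (\<Sum>i<q. real (q-i) * ((-1)^i + 1) * Lam (i+2) * e^(q+1-i)) - real ((q+1)*(q+2)) / 2 * e^(q+3) + 2*E2*e^(q+1)"
proof -
  obtain TA TC where TA: "(\<lambda>k. 1/(2*real n + 2*real k + 2) - 1/(2*real k + 1)) sums TA"
    and TC: "(\<lambda>m. 1/(2*real n + 2*real m + 3) - 1/(2*real m + 2)) sums TC"
    and T: "TA + TC + (\<Sum>k<n. 1/(2*real k + 1) + 1/(2*real n - 2*real k)) = - 1/(2*real n + 1)"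
    by (rule T_lemma)
  define SB where "SB i = (\<Sum>k<n. (1/(2*real k+1))^(i+2))" for i
  define D where "D = (\<Sum>m<n. (1/(2*real m+2))^2)"
  have A: "(\<lambda>k. (-1/(2*real k+1))^Suc q * (1/(2*real n+2*real k+2))^2) sums
     ((\<Sum>i<q. real (q-i) * ((-1)^i * Lam (i+2)) * e^(q+1-i)) + real (q+1) * e^(q+2) * TA + e^(q+1) * (E2 - D))"
  proof (rule pf_sums)
    fix k
    have "(1/(-(2*real k+1))) * (1/(2*real n+2*real k+2)) = (1/(2*real n+1)) * ((1/(-(2*real k+1))) + (1/(2*real n+2*real k+2)))"
      by (rule recip_cd) auto
    moreover have neg: "1/(-(2*real k+1)) = -1/(2*real k+1)" by (metis divide_minus_right minus_divide_left)
    ultimately show "(-1/(2*real k+1)) * (1/(2*real n+2*real k+2)) = e * ((-1/(2*real k+1)) + (1/(2*real n+2*real k+2)))"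
      unfolding e_def neg by simp
  next
    fix i assume "i < q"
    have "(\<lambda>k. (-1)^(i+2) * (1/(2*real k+1))^(i+2)) sums ((-1)^(i+2) * Lam (i+2))"
      by (intro sums_mult Lam_sums) simp
    moreover have "(-1/(2*real k+1))^(i+2) = (-1)^(i+2) * (1/(2*real k+1))^(i+2)" for k
      by (subst power_minus[symmetric]) simp
    ultimately show "(\<lambda>k. (-1/(2*real k+1))^(i+2)) sums ((-1)^i * Lam (i+2))"
      by simp
  next
    show "(\<lambda>k. (-1/(2*real k+1)) + (1/(2*real n+2*real k+2))) sums TA" using TA by (simp add: add_ac)
  next
    have "(\<lambda>k. (1/(2*real (k+n)+2))^2) sums (E2 - D)"
      unfolding D_def by (rule sums_split_initial_segment[OF E2_sums])
    thus "(\<lambda>k. (1/(2*real n+2*real k+2))^2) sums (E2 - D)" by (simp add: algebra_simps)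
  qed
  have C: "(\<lambda>m. (1/(2*real n+2*real m+3))^Suc q * (-1/(2*real m+2))^2) sums
     ((\<Sum>i<q. real (q-i) * (Lam (i+2) - SB i - e^(i+2)) * e^(q+1-i)) + real (q+1) * e^(q+2) * TC + e^(q+1) * E2)"
  proof (rule pf_sums)
    fix k
    have "(1/(2*real n+2*real k+3)) * (1/(-(2*real k+2))) = (1/(2*real n+1)) * ((1/(2*real n+2*real k+3)) + (1/(-(2*real k+2))))"
      by (rule recip_cd) auto
    moreover have neg: "1/(-(2*real k+2)) = -1/(2*real k+2)" by (metis divide_minus_right minus_divide_left)
    ultimately show "(1/(2*real n+2*real k+3)) * (-1/(2*real k+2)) = e * ((1/(2*real n+2*real k+3)) + (-1/(2*real k+2)))"
      unfolding e_def neg by simp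
  next
    fix i assume "i < q"
    have "(\<lambda>k. (1/(2*real (k + Suc n)+1))^(i+2)) sums (Lam (i+2) - (\<Sum>k<Suc n. (1/(2*real k+1))^(i+2)))"
      by (rule sums_split_initial_segment[OF Lam_sums]) simp
    moreover have "(\<Sum>k<Suc n. (1/(2*real k+1))^(i+2)) = SB i + e^(i+2)"
      unfolding SB_def e_def by simp
    ultimately show "(\<lambda>k. (1/(2*real n+2*real k+3))^(i+2)) sums (Lam (i+2) - SB i - e^(i+2))"
      by (simp add: algebra_simps)
  next
    show "(\<lambda>k. (1/(2*real n+2*real k+3)) + (-1/(2*real k+2))) sums TC" using TC by simp
  next
    show "(\<lambda>k. (-1/(2*real k+2))^2) sums E2" using E2_sums by simp
  qed
  have B: "(\<Sum>k<n. (1/(2*real k+1))^Suc q * (1/(2*real n-2*real k))^2) =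
      (\<Sum>i<q. real (q-i) * SB i * e^(q+1-i)) + real (q+1) * e^(q+2) * (\<Sum>k<n. 1/(2*real k + 1) + 1/(2*real n - 2*real k)) + e^(q+1) * D"
  proof -
    have "(\<Sum>k<n. (1/(2*real k+1))^Suc q * (1/(2*real n-2*real k))^2) =
      (\<Sum>i<q. real (q-i) * SB i * e^(q+1-i)) + real (q+1) * e^(q+2) * (\<Sum>k<n. 1/(2*real k + 1) + 1/(2*real n - 2*real k)) + e^(q+1) * (\<Sum>k<n. (1/(2*real n-2*real k))^2)"
      unfolding SB_def
    proof (rule pf_finsum)
      fix k assume "k < n"
      hence "2*real n - 2*real k \<noteq> 0" by simp
      hence "(1/(2*real k+1)) * (1/(2*real n-2*real k)) = (1/(2*real n+1)) * ((1/(2*real k+1)) + (1/(2*real n-2*real k)))"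
        by (intro recip_cd) auto
      thus "(1/(2*real k+1)) * (1/(2*real n-2*real k)) = e * ((1/(2*real k+1)) + (1/(2*real n-2*real k)))"
        unfolding e_def by simp
    qed
    moreover have "(\<Sum>k<n. (1/(2*real n-2*real k))^2) = D"
    proof -
      have "(\<Sum>k<n. (1/(2*real n-2*real k))^2) = (\<Sum>k<n. (1/(2*real (n - Suc k)+2))^2)"
        by (intro sum.cong) (auto simp: of_nat_diff)
      also have "\<dots> = D" unfolding D_def
        by (rule sum.nat_diff_reindex[where g = "\<lambda>k. (1/(2*real k + 2))^2"])
      finally show ?thesis .
    qed
    ultimately show ?thesis by simp
  qed
  have esum: "(\<Sum>i<q. real (q-i) * e^(i+2) * e^(q+1-i)) = real q * (real q + 1) / 2 * e^(q+3)"
  proof -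
    have "(\<Sum>i<q. real (q-i) * e^(i+2) * e^(q+1-i)) = (\<Sum>i<q. real (q-i) * e^(q+3))"
    proof (intro sum.cong refl)
      fix i assume "i \<in> {..<q}"
      hence "i + 2 + (q + 1 - i) = q + 3" by simp
      hence "e^(i+2) * e^(q+1-i) = e^(q+3)" by (metis power_add)
      thus "real (q-i) * e^(i+2) * e^(q+1-i) = real (q-i) * e^(q+3)" by (simp add: mult.assoc)
    qed
    also have "\<dots> = real q * (real q + 1) / 2 * e^(q+3)"
      by (simp only: sum_distrib_right[symmetric] sum_q_minus)
    finally show ?thesis .
  qed
  have main: "((\<Sum>i<q. real (q-i) * ((-1)^i * Lam (i+2)) * e^(q+1-i)) + real (q+1) * e^(q+2) * TA + e^(q+1) * (E2 - D))
     + ((\<Sum>i<q. real (q-i) * SB i * e^(q+1-i)) + real (q+1) * e^(q+2) * (\<Sum>k<n. 1/(2*real k + 1) + 1/(2*real n - 2*real k)) + e^(q+1) * D)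
     + ((\<Sum>i<q. real (q-i) * (Lam (i+2) - SB i - e^(i+2)) * e^(q+1-i)) + real (q+1) * e^(q+2) * TC + e^(q+1) * E2)
     = (\<Sum>i<q. real (q-i) * ((-1)^i + 1) * Lam (i+2) * e^(q+1-i)) - real ((q+1)*(q+2)) / 2 * e^(q+3) + 2*E2*e^(q+1)"
  proof -
    have s: "(\<Sum>i<q. real (q-i) * ((-1)^i * Lam (i+2)) * e^(q+1-i)) + (\<Sum>i<q. real (q-i) * SB i * e^(q+1-i))
       + (\<Sum>i<q. real (q-i) * (Lam (i+2) - SB i - e^(i+2)) * e^(q+1-i))
       = (\<Sum>i<q. real (q-i) * ((-1)^i + 1) * Lam (i+2) * e^(q+1-i)) - (\<Sum>i<q. real (q-i) * e^(i+2) * e^(q+1-i))"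
      unfolding sum.distrib[symmetric] sum_subtractf[symmetric] by (intro sum.cong refl) (simp add: algebra_simps)
    have t: "real (q+1) * e^(q+2) * TA + real (q+1) * e^(q+2) * (\<Sum>k<n. 1/(2*real k + 1) + 1/(2*real n - 2*real k)) + real (q+1) * e^(q+2) * TC
        = - real (q+1) * e^(q+3)"
    proof -
      have "real (q+1) * e^(q+2) * TA + real (q+1) * e^(q+2) * (\<Sum>k<n. 1/(2*real k + 1) + 1/(2*real n - 2*real k)) + real (q+1) * e^(q+2) * TC
          = real (q+1) * e^(q+2) * (TA + TC + (\<Sum>k<n. 1/(2*real k + 1) + 1/(2*real n - 2*real k)))"
        by (simp add: algebra_simps)
      also have "\<dots> = real (q+1) * e^(q+2) * (- e)" unfolding T e_def by simp
      finally show ?thesis by (simp add: eval_nat_numeral algebra_simps)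
    qed
    have "real q * (real q + 1) / 2 + real (q + 1) = real ((q+1)*(q+2)) / 2" by (simp add: field_simps)
    hence h3: "real q * (real q + 1) / 2 * e^(q+3) + real (q + 1) * e^(q+3) = real ((q+1)*(q+2)) / 2 * e^(q+3)"
      by (metis distrib_right)
    have h4: "e^(q+1)*(E2-D) + e^(q+1)*D + e^(q+1)*E2 = 2*E2*e^(q+1)" by (simp add: algebra_simps)
    show ?thesis using s t esum h3 h4 by linarith
  qed
  show ?thesis
    apply (rule exI, rule exI, intro conjI)
      apply (rule A)
     apply (rule C)
    unfolding B by (rule main)
qed

lemma pair_has_sum:
  fixes f :: "nat \<times> nat \<Rightarrow> real"
  assumes nn: "\<And>x. 0 \<le> f x" and inner: "\<And>k. (\<lambda>m. f (k,m)) sums g k" and outer: "g sums S"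
  shows "(f has_sum S) UNIV"
proof -
  have gnn: "0 \<le> g k" for k using sums_le[of "\<lambda>_. 0" "\<lambda>m. f (k,m)" 0 "g k"] inner[of k] nn by auto
  have ih: "((\<lambda>m. f (k,m)) has_sum g k) UNIV" for k
    by (rule sums_nonneg_imp_has_sum[OF inner]) (use nn in auto)
  have oh: "(g has_sum S) UNIV" by (rule sums_nonneg_imp_has_sum[OF outer gnn])
  have "f summable_on Sigma UNIV (\<lambda>_. UNIV)"
    using summable_on_SigmaI[where g = g and A = UNIV and B = "\<lambda>_. UNIV" and f = f] ih has_sum_imp_summable[OF oh] nn
    by blast
  hence "(f has_sum S) (Sigma UNIV (\<lambda>_. UNIV))"
    using has_sum_SigmaI[where g = g and A = UNIV and B = "\<lambda>_. UNIV" and f = f] ih oh by blast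
  thus ?thesis by simp
qed

lemma tail_sq:
  fixes a :: real
  assumes a: "a > 0"
  shows "summable (\<lambda>j::nat. (1/(2*real j + a + 1))^2) \<and> (\<Sum>j. (1/(2*real j + a + 1))^2) \<le> 1/a"
proof -
  define h where "h j = 1/(2*real j + a)" for j :: nat
  have "h \<longlonglongrightarrow> 0" unfolding h_def by real_asymp
  hence tel: "(\<lambda>j. h j - h (Suc j)) sums (h 0 - 0)" by (rule telescope_sums')
  have le: "(1/(2*real j + a + 1))^2 \<le> h j - h (Suc j)" for j
  proof -
    define x where "x = 2*real j + a"
    have x: "x > 0" unfolding x_def using a by simp
    have "h j - h (Suc j) = 1/x - 1/(x+2)" unfolding h_def x_def by (simp add: algebra_simps)
    also have "\<dots> = 2/(x*(x+2))" using x by (simp add: field_simps)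
    finally have hx: "h j - h (Suc j) = 2/(x*(x+2))" .
    have "(1/(x+1))^2 = 1/((x+1)*(x+1))" by (simp add: power2_eq_square)
    also have "\<dots> \<le> 2/(x*(x+2))" using x by (intro frac_le) (auto simp: algebra_simps intro: add_pos_pos mult_pos_pos)
    finally show ?thesis unfolding hx x_def by simp
  qed
  have sm: "summable (\<lambda>j::nat. (1/(2*real j + a + 1))^2)"
    by (rule summable_comparison_test[OF _ sums_summable[OF tel]]) (use le in \<open>auto intro!: exI[of _ 0]\<close>)
  have "(\<Sum>j. (1/(2*real j + a + 1))^2) \<le> (\<Sum>j. h j - h (Suc j))"
    by (rule suminf_le[OF le sm sums_summable[OF tel]])
  also have "\<dots> = h 0" using tel by (simp add: sums_iff)
  finally show ?thesis using sm unfolding h_def by simp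
qed

lemma sigma_W:
  fixes t :: nat and W0 :: real
  assumes "((\<lambda>(k,m). (1/(2*real k+1))^t * (1/(2*real m+2))^2) has_sum W0) {(k,m). k \<le> m}"
  shows "sigma_os 2 t = 4 * W0"
proof -
  define G where "G = (\<lambda>(k::nat,m::nat). (1/(2*real k+1))^t * (1/(2*real m+2))^2)"
  have "((\<lambda>(j,k). G (k,j)) has_sum W0) (Sigma UNIV (\<lambda>j. {..j}))"
    using assms unfolding G_def
    by (subst has_sum_reindex_bij_witness[where i = "\<lambda>(j,k). (k,j)" and j = "\<lambda>(k,j). (j,k)"
          and T = "{(k,m). k \<le> m}" and h = "\<lambda>(k,m). (1/(2*real k+1))^t * (1/(2*real m+2))^2"]) auto
  hence "((\<lambda>j. \<Sum>k\<le>j. G (k,j)) has_sum W0) UNIV"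
    by (rule has_sum_Sigma') (auto intro: has_sum_finite)
  hence s: "(\<lambda>j. \<Sum>k\<le>j. G (k,j)) sums W0" by (rule has_sum_imp_sums)
  have eq: "S_odd t (j + 1) / real (j + 1) ^ 2 = 4 * (\<Sum>k\<le>j. G (k,j))" for j
  proof -
    have "S_odd t (j+1) = (\<Sum>k=Suc 0..Suc j. 1 / (2 * real k - 1) ^ t)" unfolding S_odd_def by simp
    also have "\<dots> = (\<Sum>k=0..j. 1 / (2 * real (Suc k) - 1) ^ t)"
      by (subst sum.atLeast_Suc_atMost_Suc_shift) (simp add: o_def)
    also have "\<dots> = (\<Sum>k\<le>j. (1/(2*real k+1))^t)"
      by (intro sum.cong) (auto simp: atLeast0AtMost power_one_over add.commute)
    finally have "S_odd t (j+1) = (\<Sum>k\<le>j. (1/(2*real k+1))^t)" .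
    moreover have "(\<Sum>k\<le>j. G (k,j)) = (\<Sum>k\<le>j. (1/(2*real k+1))^t) * (1/(2*real j+2))^2"
      unfolding G_def by (simp add: sum_distrib_right)
    moreover have "4 * (1/(2*real j+2))^2 = 1 / real (j+1)^2"
    proof -
      have "2*real j+2 = 2 * real (j+1)" by simp
      hence "1/(2*real j+2) = (1/2) * (1/real (j+1))" by simp
      hence "(1/(2*real j+2))^2 = (1/2)^2 * (1/real (j+1))^2" by (metis power_mult_distrib)
      thus ?thesis by (simp add: power_one_over)
    qed
    ultimately show ?thesis by (simp add: field_simps)
  qed
  have "sigma_os 2 t = (\<Sum>j. 4 * (\<Sum>k\<le>j. G (k,j)))"
    unfolding sigma_os_def using eq by simp
  also have "\<dots> = 4 * W0" using sums_mult[OF s, of 4] by (simp add: sums_iff)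
  finally show ?thesis .
qed

lemma general_case:
  fixes q :: nat
  assumes ev: "even q" and q2: "q \<ge> 2"
  shows "sigma_os 2 (Suc q) = real ((q+1)*(q+2)) * Lam (q+3)
           - 2 * (\<Sum>i<q. real (q-i) * ((-1)^i + 1) * Lam (i+2) * Lam (q+1-i))"
proof -
  define p where "p = Suc q"
  have p2: "p \<ge> 2" unfolding p_def using q2 by simp
  define G where "G = (\<lambda>(k::nat,m::nat). (1/(2*real k+1))^p * (1/(2*real m+2))^2)"
  have Gnn: "0 \<le> G x" for x unfolding G_def by (auto split: prod.splits)
  define PB where "PB = Lam p * E2"
  have GU: "(G has_sum PB) UNIV"
  proof (rule pair_has_sum[OF Gnn])
    fix k
    show "(\<lambda>m. G (k,m)) sums ((1/(2*real k+1))^p * E2)"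
      unfolding G_def using sums_mult[OF E2_sums, of "(1/(2*real k+1))^p"] by simp
  next
    show "(\<lambda>k. (1/(2*real k+1))^p * E2) sums PB"
      unfolding PB_def by (rule sums_mult2[OF Lam_sums[OF p2]])
  qed
  define U where "U = {(k::nat,m::nat). k \<le> m}"
  define V where "V = {(k::nat,m::nat). m < k}"
  have sU: "G summable_on U" by (rule summable_on_subset_banach[OF has_sum_imp_summable[OF GU]]) auto
  have sV: "G summable_on V" by (rule summable_on_subset_banach[OF has_sum_imp_summable[OF GU]]) auto
  define W0 where "W0 = infsum G U"
  define C0 where "C0 = infsum G V"
  have "(G has_sum (W0 + C0)) (U \<union> V)"
    unfolding W0_def C0_def by (rule has_sum_Un_disjoint[OF has_sum_infsum[OF sU] has_sum_infsum[OF sV]]) (auto simp: U_def V_def)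
  moreover have "U \<union> V = UNIV" unfolding U_def V_def by auto
  ultimately have WC: "W0 + C0 = PB" using GU has_sum_unique by metis
  have hU: "(G has_sum W0) U" unfolding W0_def by (rule has_sum_infsum[OF sU])
  have hV: "(G has_sum C0) V" unfolding C0_def by (rule has_sum_infsum[OF sV])
  have FU: "((\<lambda>(n,k). G (k, n+k)) has_sum W0) UNIV"
    by (subst has_sum_reindex_bij_witness[where i = "\<lambda>(k,m). (m-k,k)" and j = "\<lambda>(n,k). (k,n+k)"
          and T = U and h = G]) (use hU in \<open>auto simp: U_def\<close>)
  define Ap where "Ap n = (\<Sum>k. G (k, n+k))" for n
  have Aps: "(\<lambda>k. G (k, n+k)) sums Ap n" for n
  proof -
    have "summable (\<lambda>k. G (k, n+k))"
    proof (rule summable_comparison_test[OF _ odd_pow_summable[OF p2]])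
      show "\<exists>N. \<forall>k\<ge>N. norm (G (k, n+k)) \<le> (1/(2*real k+1))^p"
      proof (intro exI allI impI)
        fix k :: nat
        have "(1/(2*real (n+k)+2))^2 \<le> 1" by (simp add: power_le_one)
        hence "(1/(2*real k+1))^p * (1/(2*real (n+k)+2))^2 \<le> (1/(2*real k+1))^p * 1"
          by (intro mult_left_mono) auto
        thus "norm (G (k, n+k)) \<le> (1/(2*real k+1))^p" unfolding G_def by simp
      qed
    qed
    thus ?thesis unfolding Ap_def by (simp add: summable_sums)
  qed
  have "((\<lambda>(n,k). G (k, n+k)) has_sum W0) (Sigma UNIV (\<lambda>_. UNIV))" using FU by simp
  hence "(Ap has_sum W0) UNIV"
    by (rule has_sum_Sigma') (auto intro!: sums_nonneg_imp_has_sum Aps Gnn)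
  hence ApS: "Ap sums W0" by (rule has_sum_imp_sums)
  have CV: "((\<lambda>(n,m). G (n+m+1, m)) has_sum C0) UNIV"
    by (subst has_sum_reindex_bij_witness[where i = "\<lambda>(k,m). (k-m-1,m)" and j = "\<lambda>(n,m). (n+m+1,m)"
          and T = V and h = G]) (use hV in \<open>auto simp: V_def\<close>)
  define Cn where "Cn n = (\<Sum>m. G (n+m+1, m))" for n
  have Cns: "(\<lambda>m. G (n+m+1, m)) sums Cn n" for n
  proof -
    have "summable (\<lambda>m. G (n+m+1, m))"
    proof (rule summable_comparison_test[OF _ even_sq_summable])
      show "\<exists>N. \<forall>m\<ge>N. norm (G (n+m+1, m)) \<le> (1/(2*real m+2))^2"
      proof (intro exI allI impI)
        fix m :: nat
        have "(1/(2*real (n+m+1)+1))^p \<le> 1" by (simp add: power_le_one)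
        hence "(1/(2*real (n+m+1)+1))^p * (1/(2*real m+2))^2 \<le> 1 * (1/(2*real m+2))^2"
          by (intro mult_right_mono) auto
        thus "norm (G (n+m+1, m)) \<le> (1/(2*real m+2))^2" unfolding G_def by simp
      qed
    qed
    thus ?thesis unfolding Cn_def by (simp add: summable_sums)
  qed
  have "((\<lambda>(n,m). G (n+m+1, m)) has_sum C0) (Sigma UNIV (\<lambda>_. UNIV))" using CV by simp
  hence "(Cn has_sum C0) UNIV"
    by (rule has_sum_Sigma') (use Cns in \<open>auto intro!: sums_nonneg_imp_has_sum Gnn\<close>)
  hence CnS: "Cn sums C0" by (rule has_sum_imp_sums)
  have BS: "((\<lambda>(n,k). G (k, n-1-k)) has_sum PB) (Sigma UNIV (\<lambda>n. {..<n}))"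
    by (subst has_sum_reindex_bij_witness[where i = "\<lambda>(k,m). (k+m+1,k)" and j = "\<lambda>(n,k). (k,n-1-k)"
          and T = UNIV and h = G]) (auto simp: GU)
  define Bn where "Bn n = (\<Sum>k<n. G (k, n-1-k))" for n
  have "(Bn has_sum PB) UNIV" unfolding Bn_def
    by (rule has_sum_Sigma'[OF BS]) (simp add: has_sum_finite)
  hence BnS: "Bn sums PB" by (rule has_sum_imp_sums)
  define R where "R n = (\<Sum>i<q. real (q-i) * ((-1)^i + 1) * Lam (i+2) * (1/(2*real n+1))^(q+1-i))
      - real ((q+1)*(q+2)) / 2 * (1/(2*real n+1))^(q+3) + 2*E2*(1/(2*real n+1))^(q+1)" for n
  have pn: "- Ap n + Bn n + Cn n = R n" for n
  proof -
    obtain VA VC where hA: "(\<lambda>k. (-1/(2*real k+1))^Suc q * (1/(2*real n+2*real k+2))^2) sums VA"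
      and hC: "(\<lambda>m. (1/(2*real n+2*real m+3))^Suc q * (-1/(2*real m+2))^2) sums VC"
      and hE: "VA + (\<Sum>k<n. (1/(2*real k+1))^Suc q * (1/(2*real n-2*real k))^2) + VC = R n"
      using per_n[where n=n and q=q] unfolding R_def by auto
    have oddp: "odd (Suc q)" using ev by simp
    have "(\<lambda>k. (-1/(2*real k+1))^Suc q * (1/(2*real n+2*real k+2))^2) = (\<lambda>k. - G (k, n+k))"
    proof
      fix k
      have e1: "-1/(2*real k+1) = -(1/(2*real k+1))" by simp
      have "(-1/(2*real k+1))^Suc q = (-(1/(2*real k+1)))^Suc q" by (simp only: e1)
      also have "\<dots> = - ((1/(2*real k+1))^Suc q)" by (rule power_minus_odd[OF oddp])
      finally have "(-1/(2*real k+1))^Suc q = - ((1/(2*real k+1))^Suc q)" .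
      thus "(-1/(2*real k+1))^Suc q * (1/(2*real n+2*real k+2))^2 = - G (k, n+k)"
        unfolding G_def p_def by (simp add: add_ac)
    qed
    hence "(\<lambda>k. - G (k, n+k)) sums VA" using hA by simp
    hence "VA = - Ap n" by (rule sums_unique2[OF _ sums_minus[OF Aps[of n]]])
    moreover have "(\<lambda>m. (1/(2*real n+2*real m+3))^Suc q * (-1/(2*real m+2))^2) = (\<lambda>m. G (n+m+1, m))"
      unfolding G_def p_def by (auto simp: add_ac)
    hence "(\<lambda>m. G (n+m+1, m)) sums VC" using hC by simp
    hence "VC = Cn n" by (rule sums_unique2[OF _ Cns[of n]])
    moreover have "(\<Sum>k<n. (1/(2*real k+1))^Suc q * (1/(2*real n-2*real k))^2) = Bn n"
      unfolding Bn_def G_def p_def by (intro sum.cong) (auto simp: of_nat_diff)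
    ultimately show ?thesis using hE by simp
  qed
  have s1: "(\<lambda>n. - Ap n + Bn n + Cn n) sums (- W0 + PB + C0)"
    by (intro sums_add sums_minus ApS BnS CnS)
  have s2: "R sums ((\<Sum>i<q. real (q-i) * ((-1)^i + 1) * Lam (i+2) * Lam (q+1-i))
      - real ((q+1)*(q+2)) / 2 * Lam (q+3) + 2*E2*Lam (q+1))"
  proof -
    have a: "(\<lambda>n. \<Sum>i<q. real (q-i) * ((-1)^i + 1) * Lam (i+2) * (1/(2*real n+1))^(q+1-i))
        sums (\<Sum>i<q. real (q-i) * ((-1)^i + 1) * Lam (i+2) * Lam (q+1-i))"
    proof (rule sums_sum)
      fix i assume "i \<in> {..<q}"
      hence "2 \<le> q + 1 - i" by simp
      thus "(\<lambda>n. real (q-i) * ((-1)^i + 1) * Lam (i+2) * (1/(2*real n+1))^(q+1-i))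
        sums (real (q-i) * ((-1)^i + 1) * Lam (i+2) * Lam (q+1-i))"
        by (rule sums_mult[OF Lam_sums])
    qed
    have b: "(\<lambda>n. real ((q+1)*(q+2)) / 2 * (1/(2*real n+1))^(q+3)) sums (real ((q+1)*(q+2)) / 2 * Lam (q+3))"
      by (rule sums_mult[OF Lam_sums]) simp
    have c: "(\<lambda>n. 2*E2 * (1/(2*real n+1))^(q+1)) sums (2*E2 * Lam (q+1))"
      by (rule sums_mult[OF Lam_sums]) (use q2 in simp)
    show ?thesis unfolding R_def by (rule sums_add[OF sums_diff[OF a b] c])
  qed
  have "- W0 + PB + C0 = (\<Sum>i<q. real (q-i) * ((-1)^i + 1) * Lam (i+2) * Lam (q+1-i))
      - real ((q+1)*(q+2)) / 2 * Lam (q+3) + 2*E2*Lam (q+1)"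
  proof -
    have "(\<lambda>n. - Ap n + Bn n + Cn n) = R" using pn by auto
    thus ?thesis using sums_unique2[OF s1] s2 by simp
  qed
  moreover have "2*E2*Lam (q+1) = 2*PB" unfolding PB_def p_def by simp
  moreover have "2*(real ((q+1)*(q+2)) / 2 * Lam (q+3)) = real ((q+1)*(q+2)) * Lam (q+3)" by simp
  ultimately have W0v: "4 * W0 = real ((q+1)*(q+2)) * Lam (q+3)
           - 2 * (\<Sum>i<q. real (q-i) * ((-1)^i + 1) * Lam (i+2) * Lam (q+1-i))"
    using WC by linarith
  have "sigma_os 2 (Suc q) = 4 * W0"
    by (rule sigma_W) (use hU in \<open>simp add: G_def U_def p_def\<close>)
  thus ?thesis using W0v by simp
qed

lemma pair_summable_tail:
  fixes w a :: "nat \<Rightarrow> real"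
  assumes w: "\<And>k. 0 \<le> w k" and a: "\<And>k. a k > 0" and s: "summable (\<lambda>k. w k / a k)"
  shows "(\<lambda>(k,j). w k * (1/(2*real j + a k + 1))^2) summable_on UNIV"
proof -
  define tl where "tl k = (\<Sum>j. (1/(2*real j + a k + 1))^2)" for k
  have tl: "summable (\<lambda>j. (1/(2*real j + a k + 1))^2) \<and> tl k \<le> 1 / a k" for k
    unfolding tl_def by (rule tail_sq[OF a])
  have inner: "(\<lambda>j. (\<lambda>(k,j). w k * (1/(2*real j + a k + 1))^2) (k,j)) sums (w k * tl k)" for k
    using sums_mult[OF summable_sums[OF conjunct1[OF tl[of k]]], of "w k"] unfolding tl_def by simp
  have gs: "summable (\<lambda>k. w k * tl k)"
  proof (rule summable_comparison_test[OF _ s])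
    show "\<exists>N. \<forall>k\<ge>N. norm (w k * tl k) \<le> w k / a k"
    proof (intro exI allI impI)
      fix k :: nat
      have t0: "0 \<le> tl k" unfolding tl_def by (intro suminf_nonneg conjunct1[OF tl[of k]]) simp
      have "w k * tl k \<le> w k * (1 / a k)" by (intro mult_left_mono w) (use tl[of k] in auto)
      thus "norm (w k * tl k) \<le> w k / a k" using w[of k] t0 by simp
    qed
  qed
  have "((\<lambda>(k,j). w k * (1/(2*real j + a k + 1))^2) has_sum (\<Sum>k. w k * tl k)) UNIV"
    by (rule pair_has_sum[OF _ inner summable_sums[OF gs]]) (use w in \<open>auto split: prod.splits\<close>)
  thus ?thesis by (rule has_sum_imp_summable)
qed

lemma sym_pf:
  fixes u v :: real
  assumes "u > 0" "v > 0"
  shows "(1/(u+v))^2 * (1/u + 1/v) = 1/v * (1/u * (1/(u+v)))"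
proof -
  have uv: "u + v > 0" using assms by auto
  have ha: "1/u + 1/v = (u+v) * ((1/u) * (1/v))" using assms by (simp add: field_simps)
  have "(1/(u+v))^2 * (1/u + 1/v) = (1/(u+v)) * ((u+v) * (1/(u+v))) * ((1/u) * (1/v))"
    unfolding ha power2_eq_square by (simp only: mult_ac)
  also have "(u+v) * (1/(u+v)) = 1" using uv by simp
  finally show ?thesis by simp
qed

lemma recip_cd2:
  fixes x y N :: real
  assumes "x \<noteq> 0" "y \<noteq> 0" "y - x = N" "N \<noteq> 0"
  shows "(1/x) * (1/y) = (1/N) * (1/x - 1/y)"
  using assms by (simp add: field_simps)

lemma le_odd_sq: "1/(2*real k+1) / (2*real k+2) \<le> (1/(2*real k+1))^2"
proof -
  have "1/(2*real k+1) / (2*real k+2) = 1/((2*real k+1)*(2*real k+2))" by simp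
  also have "\<dots> \<le> 1/((2*real k+1)*(2*real k+1))" by (intro divide_left_mono mult_left_mono) auto
  finally show ?thesis by (simp add: power2_eq_square)
qed

lemma case_one: "sigma_os 2 1 = 2 * Lam 3"
proof -
  define G1 where "G1 = (\<lambda>(k::nat,m::nat). (1/(2*real k+1))^1 * (1/(2*real m+2))^2)"
  have G1nn: "0 \<le> G1 x" for x unfolding G1_def by (auto split: prod.splits)
  have sF0: "(\<lambda>(k,j). 1/(2*real k+1) * (1/(2*real j + (2*real k+1) + 1))^2) summable_on UNIV"
  proof (rule pair_summable_tail)
    show "summable (\<lambda>k. 1/(2*real k+1) / (2*real k+1))"
      using odd_pow_summable[of 2] by (simp add: power2_eq_square)
  qed auto
  have "(\<lambda>(k,j). G1 (k, j+k)) summable_on UNIV"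
    using sF0 by (rule summable_on_cong[THEN iffD1, rotated]) (auto simp: G1_def algebra_simps)
  define U where "U = {(k::nat,m::nat). k \<le> m}"
  have sU: "G1 summable_on U"
    using \<open>(\<lambda>(k,j). G1 (k, j+k)) summable_on UNIV\<close>
    by (subst summable_on_reindex_bij_witness[where j = "\<lambda>(k,m). (k,m-k)" and i = "\<lambda>(k,m). (k,m+k)"
          and T = UNIV and h = "\<lambda>(k,j). G1 (k, j+k)"]) (auto simp: U_def)
  define W0 where "W0 = infsum G1 U"
  have hU: "(G1 has_sum W0) U" unfolding W0_def by (rule has_sum_infsum[OF sU])
  have sig: "sigma_os 2 1 = 4 * W0"
    by (rule sigma_W) (use hU in \<open>simp add: G1_def U_def\<close>)
  have FU: "((\<lambda>(n,k). G1 (k, n+k)) has_sum W0) UNIV"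
    by (subst has_sum_reindex_bij_witness[where i = "\<lambda>(k,m). (m-k,k)" and j = "\<lambda>(n,k). (k,n+k)"
          and T = U and h = G1]) (use hU in \<open>auto simp: U_def\<close>)
  define H where "H = (\<lambda>(n::nat,k::nat). G1 (k, n+k) + G1 (n, k+n))"
  have FU': "((\<lambda>(n,k). G1 (n, k+n)) has_sum W0) UNIV"
    using FU has_sum_swap[where f = "\<lambda>(n,k). G1 (k, n+k)" and S = W0 and A = UNIV and B = UNIV] by (simp add: case_prod_unfold)
  have HU: "(H has_sum (2*W0)) UNIV"
    using has_sum_add[OF FU FU'] unfolding H_def by (simp add: case_prod_unfold)
  have Hval: "H (n,k) = 1/(2*real n+1) * (1/(2*real k+1) * (1/(2*real n+2*real k+2)))" for n k
  proof -
    have "H (n,k) = (1/(2*real n+2*real k+2))^2 * (1/(2*real k+1) + 1/(2*real n+1))"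
      unfolding H_def G1_def by (simp add: algebra_simps)
    also have "\<dots> = (1/((2*real k+1) + (2*real n+1)))^2 * (1/(2*real k+1) + 1/(2*real n+1))"
      by (simp add: algebra_simps)
    also have "\<dots> = 1/(2*real n+1) * (1/(2*real k+1) * (1/((2*real k+1) + (2*real n+1))))"
      by (rule sym_pf) auto
    also have "\<dots> = 1/(2*real n+1) * (1/(2*real k+1) * (1/(2*real n+2*real k+2)))"
      by (simp add: algebra_simps)
    finally show ?thesis .
  qed
  define Ah where "Ah n = (\<Sum>k. H (n,k))" for n
  have Ahs: "(\<lambda>k. H (n,k)) sums Ah n" for n
  proof -
    have "summable (\<lambda>k. H (n,k))"
    proof (rule summable_comparison_test[OF _ odd_pow_summable[of 2]])
      show "\<exists>N. \<forall>k\<ge>N. norm (H (n,k)) \<le> (1/(2*real k+1))^2"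
      proof (intro exI allI impI)
        fix k :: nat
        have "H (n,k) \<le> 1 * (1/(2*real k+1) * (1/(2*real k+1)))" unfolding Hval
          by (intro mult_mono divide_left_mono) auto
        moreover have "0 \<le> H (n,k)" unfolding Hval by simp
        ultimately show "norm (H (n,k)) \<le> (1/(2*real k+1))^2" by (simp add: power2_eq_square)
      qed
    qed simp
    thus ?thesis unfolding Ah_def by (simp add: summable_sums)
  qed
  have "(H has_sum (2*W0)) (Sigma UNIV (\<lambda>_. UNIV))" using HU by simp
  hence "(Ah has_sum (2*W0)) UNIV"
    by (rule has_sum_Sigma') (use Ahs in \<open>auto intro!: sums_nonneg_imp_has_sum simp: Hval\<close>)
  hence AhS: "Ah sums (2*W0)" by (rule has_sum_imp_sums)
  define G' where "G' = (\<lambda>(k::nat,m::nat). 1/(2*real k+1) * (1/(2*real m+2) * (1/(2*real k+2*real m+3))))"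
  have G'nn: "0 \<le> G' x" for x unfolding G'_def by (auto split: prod.splits)
  have sGa0: "(\<lambda>(k,j). 1/(2*real k+1) * (1/(2*real j + (2*real k+2) + 1))^2) summable_on UNIV"
  proof (rule pair_summable_tail)
    show "summable (\<lambda>k. 1/(2*real k+1) / (2*real k+2))"
      by (rule summable_comparison_test[OF _ odd_pow_summable[of 2]]) (use le_odd_sq in \<open>auto intro!: exI[of _ 0]\<close>)
  qed auto
  have sGb0: "(\<lambda>(m,j). 1/(2*real m+2) * (1/(2*real j + (2*real m+2) + 1))^2) summable_on UNIV"
  proof (rule pair_summable_tail)
    show "summable (\<lambda>k. 1/(2*real k+2) / (2*real k+2))"
      using even_sq_summable by (simp add: power2_eq_square)
  qed auto
  have sGb: "(\<lambda>(k,m). 1/(2*real m+2) * (1/(2*real k + (2*real m+2) + 1))^2) summable_on UNIV"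
    using sGb0 summable_on_swap[where f = "\<lambda>(m,j). 1/(2*real m+2) * (1/(2*real j + (2*real m+2) + 1))^2" and A = UNIV and B = UNIV]
    by (simp add: case_prod_unfold)
  have sG': "G' summable_on UNIV"
  proof -
    have "(\<lambda>x. (\<lambda>(k,j). 1/(2*real k+1) * (1/(2*real j + (2*real k+2) + 1))^2) x
              + (\<lambda>(k,m). 1/(2*real m+2) * (1/(2*real k + (2*real m+2) + 1))^2) x) summable_on UNIV"
      by (rule summable_on_add[OF sGa0 sGb])
    moreover have "(\<lambda>(k,j). 1/(2*real k+1) * (1/(2*real j + (2*real k+2) + 1))^2) x
              + (\<lambda>(k,m). 1/(2*real m+2) * (1/(2*real k + (2*real m+2) + 1))^2) x = G' x" for x
    proof (cases x)
      case (Pair k m)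
      have "1/(2*real k+1) * (1/(2*real m + (2*real k+2) + 1))^2 + 1/(2*real m+2) * (1/(2*real k + (2*real m+2) + 1))^2
          = (1/(2*real k + 2*real m + 3))^2 * (1/(2*real k+1) + 1/(2*real m+2))" by (simp add: algebra_simps)
      also have "\<dots> = (1/((2*real m+2) + (2*real k+1)))^2 * (1/(2*real m+2) + 1/(2*real k+1))"
        by (simp add: algebra_simps)
      also have "\<dots> = 1/(2*real k+1) * (1/(2*real m+2) * (1/((2*real m+2) + (2*real k+1))))"
        by (rule sym_pf) auto
      also have "\<dots> = 1/(2*real k+1) * (1/(2*real m+2) * (1/(2*real k+2*real m+3)))"
        by (simp add: algebra_simps)
      finally show ?thesis unfolding G'_def Pair by simp
    qed
    ultimately show ?thesis by simp
  qed
  then obtain S' where hG': "(G' has_sum S') UNIV" by (auto simp: summable_on_def)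
  define Cb where "Cb n = (\<Sum>m. G' (n,m))" for n
  have Cbs: "(\<lambda>m. G' (n,m)) sums Cb n" for n
  proof -
    have "summable (\<lambda>m. G' (n,m))"
    proof (rule summable_comparison_test[OF _ even_sq_summable])
      show "\<exists>N. \<forall>m\<ge>N. norm (G' (n,m)) \<le> (1/(2*real m+2))^2"
      proof (intro exI allI impI)
        fix m :: nat
        have "G' (n,m) \<le> 1 * (1/(2*real m+2) * (1/(2*real m+2)))" unfolding G'_def prod.case
          by (intro mult_mono divide_left_mono) auto
        moreover have "0 \<le> G' (n,m)" by (rule G'nn)
        ultimately show "norm (G' (n,m)) \<le> (1/(2*real m+2))^2" by (simp add: power2_eq_square)
      qed
    qed
    thus ?thesis unfolding Cb_def by (simp add: summable_sums)
  qed
  have "(G' has_sum S') (Sigma UNIV (\<lambda>_. UNIV))" using hG' by simp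
  hence "(Cb has_sum S') UNIV"
    by (rule has_sum_Sigma') (use Cbs in \<open>auto intro!: sums_nonneg_imp_has_sum G'nn\<close>)
  hence CbS: "Cb sums S'" by (rule has_sum_imp_sums)
  have BS: "((\<lambda>(n,k). G' (k, n-1-k)) has_sum S') (Sigma UNIV (\<lambda>n. {..<n}))"
    by (subst has_sum_reindex_bij_witness[where i = "\<lambda>(k,m). (k+m+1,k)" and j = "\<lambda>(n,k). (k,n-1-k)"
          and T = UNIV and h = G']) (auto simp: hG')
  define Bb where "Bb n = (\<Sum>k<n. G' (k, n-1-k))" for n
  have "(Bb has_sum S') UNIV" unfolding Bb_def
    by (rule has_sum_Sigma'[OF BS]) (simp add: has_sum_finite)
  hence BbS: "Bb sums S'" by (rule has_sum_imp_sums)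
  have pn: "Ah n - Bb n + Cb n = (1/(2*real n+1))^3" for n
  proof -
    define e where "e = 1/(2*real n+1)"
    obtain TA TC where TA: "(\<lambda>k. 1/(2*real n + 2*real k + 2) - 1/(2*real k + 1)) sums TA"
      and TC: "(\<lambda>m. 1/(2*real n + 2*real m + 3) - 1/(2*real m + 2)) sums TC"
      and T: "TA + TC + (\<Sum>k<n. 1/(2*real k + 1) + 1/(2*real n - 2*real k)) = - 1/(2*real n + 1)"
      by (rule T_lemma)
    have hA: "H (n,k) = - (e*e) * (1/(2*real n + 2*real k + 2) - 1/(2*real k + 1))" for k
    proof -
      have r: "(1/(2*real k+1)) * (1/(2*real n+2*real k+2)) = e * (1/(2*real k+1) - 1/(2*real n+2*real k+2))"
        unfolding e_def by (rule recip_cd2) auto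
      have "H (n,k) = e * ((1/(2*real k+1)) * (1/(2*real n+2*real k+2)))" unfolding Hval e_def ..
      also have "\<dots> = e * (e * (1/(2*real k+1) - 1/(2*real n+2*real k+2)))" by (simp only: r)
      finally show ?thesis by (simp add: algebra_simps)
    qed
    have "Ah n = - (e*e) * TA"
      using sums_unique2[OF Ahs[of n], of "- (e*e) * TA"] sums_mult[OF TA, of "- (e*e)"] unfolding hA by simp
    moreover have hC: "G' (n,m) = - (e*e) * (1/(2*real n + 2*real m + 3) - 1/(2*real m + 2))" for m
    proof -
      have "(1/(2*real m+2)) * (1/(2*real n+2*real m+3)) = e * (1/(2*real m+2) - 1/(2*real n+2*real m+3))"
        unfolding e_def by (rule recip_cd2) auto
      moreover have "G' (n,m) = e * ((1/(2*real m+2)) * (1/(2*real n+2*real m+3)))"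
        unfolding G'_def e_def by (simp add: algebra_simps)
      ultimately have "G' (n,m) = e * (e * (1/(2*real m+2) - 1/(2*real n+2*real m+3)))" by simp
      thus ?thesis by (simp add: algebra_simps)
    qed
    have "Cb n = - (e*e) * TC"
      using sums_unique2[OF Cbs[of n], of "- (e*e) * TC"] sums_mult[OF TC, of "- (e*e)"] unfolding hC by simp
    moreover have "Bb n = (e*e) * (\<Sum>k<n. 1/(2*real k + 1) + 1/(2*real n - 2*real k))"
    proof -
      have "G' (k, n-1-k) = (e*e) * (1/(2*real k + 1) + 1/(2*real n - 2*real k))" if "k < n" for k
      proof -
        have nz: "2*real n - 2*real k \<noteq> 0" using that by simp
        have "(1/(2*real k+1)) * (1/(2*real n-2*real k)) = (1/(2*real n+1)) * ((1/(2*real k+1)) + (1/(2*real n-2*real k)))"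
          by (rule recip_cd) (use nz in auto)
        moreover have "G' (k, n-1-k) = e * ((1/(2*real k+1)) * (1/(2*real n-2*real k)))"
          unfolding G'_def e_def using that by (simp add: of_nat_diff algebra_simps)
        ultimately show ?thesis unfolding e_def by (simp add: algebra_simps)
      qed
      thus ?thesis unfolding Bb_def by (simp add: sum_distrib_left)
    qed
    ultimately have "Ah n - Bb n + Cb n = - (e*e) * (TA + TC + (\<Sum>k<n. 1/(2*real k + 1) + 1/(2*real n - 2*real k)))"
      by (simp add: algebra_simps)
    also have "\<dots> = e^3" unfolding T e_def by (simp add: power3_eq_cube)
    finally show ?thesis unfolding e_def .
  qed
  have "(\<lambda>n. Ah n - Bb n + Cb n) sums (2*W0 - S' + S')" by (intro sums_add sums_diff AhS BbS CbS)
  moreover have "(\<lambda>n. Ah n - Bb n + Cb n) sums Lam 3" unfolding pn by (rule Lam_sums) simp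
  ultimately have "2*W0 = Lam 3" using sums_unique2 by force
  thus ?thesis using sig by simp
qed

lemma sum_rearr:
  fixes m :: nat
  shows "(\<Sum>i<2*m. real (2*m-i) * ((-1)^i + 1) * Lam (i+2) * Lam (2*m+1-i))
       = 4 * (\<Sum>j=1..m. real j * Lam (2*(m+1) - 2*j) * Lam (2*j+1))"
proof -
  define g where "g k = 2 * real (2*m - 2*k) * Lam (2*k+2) * Lam (2*m+1-2*k)" for k
  have "(\<Sum>i<2*m. real (2*m-i) * ((-1)^i + 1) * Lam (i+2) * Lam (2*m+1-i))
      = (\<Sum>k<m. real (2*m-2*k) * ((-1)^(2*k) + 1) * Lam (2*k+2) * Lam (2*m+1-2*k)
              + real (2*m-(2*k+1)) * ((-1)^(2*k+1) + 1) * Lam (2*k+1+2) * Lam (2*m+1-(2*k+1)))"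
    by (rule sum_even_odd_split)
  also have "\<dots> = (\<Sum>k<m. g k)" unfolding g_def by (intro sum.cong) auto
  also have "\<dots> = (\<Sum>k<m. g (m - Suc k))" by (rule sum.nat_diff_reindex[symmetric])
  also have "\<dots> = (\<Sum>k<m. 4 * (real (Suc k) * Lam (2*(m+1) - 2*Suc k) * Lam (2*Suc k+1)))"
  proof (intro sum.cong refl)
    fix k assume "k \<in> {..<m}"
    hence k: "k < m" by simp
    have "2*m - 2*(m - Suc k) = 2 * Suc k" using k by simp
    moreover have "2*(m - Suc k) + 2 = 2*(m+1) - 2*Suc k" using k by simp
    moreover have "2*m+1-2*(m - Suc k) = 2*Suc k+1" using k by simp
    ultimately show "g (m - Suc k) = 4 * (real (Suc k) * Lam (2*(m+1) - 2*Suc k) * Lam (2*Suc k+1))"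
      unfolding g_def by simp
  qed
  also have "\<dots> = 4 * (\<Sum>j=1..m. real j * Lam (2*(m+1) - 2*j) * Lam (2*j+1))"
    by (simp add: sum_distrib_left sum.atLeast1_atMost_eq)
  finally show ?thesis .
qed

theorem mainTheorem6:
  fixes a :: nat
  assumes "a \<ge> 1"
  shows "sigma_os 2 (2 * a - 1) =
    2 * real a * (2 * real a - 1) * dlambda (2 * real a + 1)
    - 8 * (\<Sum>j=1..a-1. real j * dlambda (2 * real a - 2 * real j) * dlambda (2 * real j + 1))"
proof -
  have dl1: "dlambda (2 * real a + 1) = Lam (2*a+1)"
    using dlambda_eq[of "2*a+1"] by (simp add: add.commute)
  have dls: "(\<Sum>j=1..a-1. real j * dlambda (2 * real a - 2 * real j) * dlambda (2 * real j + 1))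
     = (\<Sum>j=1..a-1. real j * Lam (2*a - 2*j) * Lam (2*j+1))"
  proof (intro sum.cong refl)
    fix j assume "j \<in> {1..a-1}"
    hence j: "j \<le> a" by auto
    have "dlambda (2 * real a - 2 * real j) = Lam (2*a - 2*j)"
      using dlambda_eq[of "2*a-2*j"] j by (simp add: of_nat_diff)
    moreover have "dlambda (2 * real j + 1) = Lam (2*j+1)"
      using dlambda_eq[of "2*j+1"] by (simp add: add.commute)
    ultimately show "real j * dlambda (2 * real a - 2 * real j) * dlambda (2 * real j + 1)
        = real j * Lam (2*a - 2*j) * Lam (2*j+1)" by simp
  qed
  show ?thesis
  proof (cases "a = 1")
    case True
    thus ?thesis using case_one dl1 by simp
  next
    case False
    define m where "m = a - 1"
    have m: "a = m + 1" "m \<ge> 1" unfolding m_def using assms False by auto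
    define q where "q = 2*m"
    have q: "even q" "q \<ge> 2" unfolding q_def using m by auto
    have "sigma_os 2 (Suc q) = real ((q+1)*(q+2)) * Lam (q+3)
           - 2 * (\<Sum>i<q. real (q-i) * ((-1)^i + 1) * Lam (i+2) * Lam (q+1-i))"
      by (rule general_case[OF q])
    also have "(\<Sum>i<q. real (q-i) * ((-1)^i + 1) * Lam (i+2) * Lam (q+1-i))
       = 4 * (\<Sum>j=1..m. real j * Lam (2*(m+1) - 2*j) * Lam (2*j+1))"
      unfolding q_def by (rule sum_rearr)
    finally have h: "sigma_os 2 (Suc q) = real ((q+1)*(q+2)) * Lam (q+3)
           - 8 * (\<Sum>j=1..m. real j * Lam (2*(m+1) - 2*j) * Lam (2*j+1))" by simp
    have e1: "Suc q = 2*a - 1" unfolding q_def m(1) by simp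
    have e2: "real ((q+1)*(q+2)) = 2 * real a * (2 * real a - 1)" unfolding q_def m(1) by (simp add: algebra_simps)
    have e3: "q + 3 = 2*a+1" unfolding q_def m(1) by simp
    have e4: "(\<Sum>j=1..m. real j * Lam (2*(m+1) - 2*j) * Lam (2*j+1)) = (\<Sum>j=1..a-1. real j * Lam (2*a - 2*j) * Lam (2*j+1))"
      unfolding m(1) by simp
    show ?thesis using h unfolding e1 e2 e3 e4 dl1 dls .
  qed
qed

end
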